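(* Let $X$ be a complete CAT(0) space and $f:X\to(-\infty,\infty]$ a convex, proper, lower semicontinuous function attaining its minimum. Let $\psi:[0,\infty)\to[0,\infty)$ be an increasing function vanishing only at $0$, and $(\gamma_n)$ a sequence in $(0,\infty)$ with $\sum_{n=0}^\infty\gamma_n^2=\infty$ having rate of divergence $\theta$. Let $b\in\mathbb{N}$, $p\in Argmin(f)$ and $C$ the closed ball of center $p$ and radius $b$. Suppose $f$ is uniformly convex on $C$ with modulus $\psi$. For $x\in C$ let $x_0:=x$ and $x_{n+1}:=J_{\gamma_n}x_n$. Then $p$ is the unique minimizer of $f$ in $C$ and $(x_n)$ converges strongly to $p$ with rate of convergence $$\Omega_{b,\theta,\psi}(k):=\theta\left(b^2\left(\left\lceil\frac{2b}{2\psi\left(\frac1{k+1}\right)}\right\rceil+1\right)^2\right)+1.$$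
   Context: A geodesic space $(X,d)$ is CAT(0) if for all $z\in X$, all geodesics $\gamma:[a,b]\to X$ and all $t\in[0,1]$, $d^2(z,\gamma((1-t)a+tb))\le(1-t)d^2(z,\gamma(a))+td^2(z,\gamma(b))-t(1-t)d^2(\gamma(a),\gamma(b))$; $(1-t)x+ty$ denotes the point at distance $t\,d(x,y)$ from $x$ on the unique geodesic from $x$ to $y$. $Argmin(f)$ is the set of minimizers of $f$. $J_\gamma(x):=\arg\min_{y\in X}\left[f(y)+\frac1{2\gamma}d^2(x,y)\right]$ (exists uniquely). $f$ is uniformly convex on $C$ with modulus $\psi$ if for all $x,y\in C$, $t\in[0,1]$: $f((1-t)x+ty)\le(1-t)f(x)+tf(y)-t(1-t)\psi(d(x,y))$. A rate of divergence for $\sum\gamma_n^2=\infty$ is $\theta:\mathbb{N}\to\mathbb{N}$ with $\sum_{n=0}^{\theta(K)}\gamma_n^2\ge K$ for all $K$. A rate of convergence of $a_n\to a$ is $\Phi$ with $d(a_n,a)\le\frac1{k+1}$ for all $k$ and $n\ge\Phi(k)$. *)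

theory Defs
  imports "HOL-Analysis.Analysis"
begin

definition is_geodesic :: "(real \<Rightarrow> 'a::metric_space) \<Rightarrow> real \<Rightarrow> real \<Rightarrow> bool" where
  "is_geodesic g a b \<longleftrightarrow> a \<le> b \<and>
     (\<forall>s\<in>{a..b}. \<forall>t\<in>{a..b}. dist (g s) (g t) = \<bar>s - t\<bar>)"

definition geodesic_space :: "'a::metric_space itself \<Rightarrow> bool" where
  "geodesic_space _ \<longleftrightarrow>
     (\<forall>x y::'a. \<exists>g a b. is_geodesic g a b \<and> g a = x \<and> g b = y)"

definition CAT0 :: "'a::metric_space itself \<Rightarrow> bool" where
  "CAT0 T \<longleftrightarrow> geodesic_space T \<and>
     (\<forall>(z::'a) g a b t. is_geodesic g a b \<longrightarrow> t \<in> {0..1} \<longrightarrow>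
        (dist z (g ((1 - t) * a + t * b)))\<^sup>2
          \<le> (1 - t) * (dist z (g a))\<^sup>2 + t * (dist z (g b))\<^sup>2
             - t * (1 - t) * (dist (g a) (g b))\<^sup>2)"

text \<open>(1-t)x + ty: the point at distance t d(x,y) from x on the (unique) geodesic from x to y.\<close>
definition geo_comb :: "real \<Rightarrow> 'a::metric_space \<Rightarrow> 'a \<Rightarrow> 'a" where
  "geo_comb t x y = (THE z. \<exists>g a b. is_geodesic g a b \<and> g a = x \<and> g b = y \<and>
       z = g ((1 - t) * a + t * b))"

definition convex_fun :: "('a::metric_space \<Rightarrow> ereal) \<Rightarrow> bool" where
  "convex_fun f \<longleftrightarrow> (\<forall>x y t. t \<in> {0..1} \<longrightarrow>
     f (geo_comb t x y) \<le> ereal (1 - t) * f x + ereal t * f y)"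

definition proper_fun :: "('a \<Rightarrow> ereal) \<Rightarrow> bool" where
  "proper_fun f \<longleftrightarrow> (\<forall>x. f x \<noteq> -\<infinity>) \<and> (\<exists>x. f x \<noteq> \<infinity>)"

definition lsc_fun :: "('a::topological_space \<Rightarrow> ereal) \<Rightarrow> bool" where
  "lsc_fun f \<longleftrightarrow> (\<forall>c. closed {x. f x \<le> c})"

definition Argmin :: "('a \<Rightarrow> ereal) \<Rightarrow> 'a set" where
  "Argmin f = {x. \<forall>y. f x \<le> f y}"

definition unif_convex_on :: "('a::metric_space \<Rightarrow> ereal) \<Rightarrow> 'a set \<Rightarrow> (real \<Rightarrow> real) \<Rightarrow> bool" where
  "unif_convex_on f C \<psi> \<longleftrightarrow> (\<forall>x\<in>C. \<forall>y\<in>C. \<forall>t\<in>{0..1}.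
     f (geo_comb t x y) \<le> ereal (1 - t) * f x + ereal t * f y
                          - ereal (t * (1 - t) * \<psi> (dist x y)))"

definition resolvent :: "('a::metric_space \<Rightarrow> ereal) \<Rightarrow> real \<Rightarrow> 'a \<Rightarrow> 'a" where
  "resolvent f \<gamma> x = (THE y. \<forall>z. f y + ereal ((dist x y)\<^sup>2 / (2 * \<gamma>))
                             \<le> f z + ereal ((dist x z)\<^sup>2 / (2 * \<gamma>)))"

definition divergence_rate :: "(nat \<Rightarrow> real) \<Rightarrow> (nat \<Rightarrow> nat) \<Rightarrow> bool" where
  "divergence_rate \<gamma> \<theta> \<longleftrightarrow> (\<forall>K. (\<Sum>n=0..\<theta> K. (\<gamma> n)\<^sup>2) \<ge> real K)"

definition Omega :: "nat \<Rightarrow> (nat \<Rightarrow> nat) \<Rightarrow> (real \<Rightarrow> real) \<Rightarrow> nat \<Rightarrow> nat" where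
  "Omega b \<theta> \<psi> k = \<theta> (b\<^sup>2 * (nat \<lceil>(2 * real b) / (2 * \<psi> (1 / (real k + 1)))\<rceil> + 1)\<^sup>2) + 1"

end

theory Submission
  imports Defs
begin

lemma geo_comb_ineq:
  assumes cat: "CAT0 TYPE('a::metric_space)" and t: "0 \<le> t" "t \<le> 1"
  shows "(dist z (geo_comb t x y))\<^sup>2 \<le> (1-t)*(dist z x)\<^sup>2 + t*(dist z y)\<^sup>2 - t*(1-t)*(dist x (y::'a))\<^sup>2"
proof -
  have ineq: "\<And>(z::'a) g a b. is_geodesic g a b \<Longrightarrow>
        (dist z (g ((1 - t) * a + t * b)))\<^sup>2
          \<le> (1 - t) * (dist z (g a))\<^sup>2 + t * (dist z (g b))\<^sup>2
             - t * (1 - t) * (dist (g a) (g b))\<^sup>2"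
    using cat t unfolding CAT0_def by auto
  from cat obtain g a b where g: "is_geodesic g a b" "g a = x" "g b = y"
    unfolding CAT0_def geodesic_space_def by blast
  have "geo_comb t x y = g ((1-t)*a + t*b)"
    unfolding geo_comb_def
  proof (rule the_equality)
    show "\<exists>g' a' b'. is_geodesic g' a' b' \<and> g' a' = x \<and> g' b' = y \<and> g ((1-t)*a + t*b) = g' ((1-t)*a'+t*b')"
      using g by blast
  next
    fix w assume "\<exists>g' a' b'. is_geodesic g' a' b' \<and> g' a' = x \<and> g' b' = y \<and> w = g' ((1-t)*a'+t*b')"
    then obtain g' a' b' where g': "is_geodesic g' a' b'" "g' a' = x" "g' b' = y" "w = g' ((1-t)*a'+t*b')"
      by blast
    have ab: "a' \<le> b'" using g'(1) unfolding is_geodesic_def by auto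
    have s: "(1-t)*a'+t*b' \<in> {a'..b'}" using ab t mult_right_mono[OF ab, of t] mult_right_mono[OF ab, of "1-t"]
      by (auto simp: algebra_simps)
    have D: "dist x y = b' - a'" using g' ab unfolding is_geodesic_def by force
    have d1: "dist w x = t*(b'-a')" using g' s ab t unfolding is_geodesic_def
      by (auto simp: algebra_simps abs_if)
    have d2: "dist w y = (1-t)*(b'-a')" using g' s ab t unfolding is_geodesic_def
      by (auto simp: algebra_simps abs_if)
    have "(dist w (g ((1 - t) * a + t * b)))\<^sup>2 \<le> (1-t)*(t*(b'-a'))\<^sup>2 + t*((1-t)*(b'-a'))\<^sup>2 - t*(1-t)*(b'-a')\<^sup>2"
      using ineq[OF g(1), of w] g d1 d2 D by simp
    also have "\<dots> = 0" by (simp add: algebra_simps power2_eq_square)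
    finally show "w = g ((1 - t) * a + t * b)" by simp
  qed
  then show ?thesis using ineq[OF g(1), of z] g by simp
qed

lemma mid_ineq:
  assumes cat: "CAT0 TYPE('a::metric_space)" and conv: "convex_fun f" and g: "\<gamma> > 0"
    and mu: "\<forall>z. ereal \<mu> \<le> f z + ereal ((dist x z)\<^sup>2/(2*\<gamma>))"
    and fu: "f u = ereal a" and fv: "f (v::'a) = ereal c"
  shows "(dist u v)\<^sup>2/(8*\<gamma>) \<le> (a + (dist x u)\<^sup>2/(2*\<gamma>))/2 + (c + (dist x v)\<^sup>2/(2*\<gamma>))/2 - \<mu>"
proof -
  define m where "m = geo_comb (1/2) u v"
  have fm: "f m \<le> ereal (a/2 + c/2)"
    using conv[unfolded convex_fun_def, rule_format, of "1/2" u v] fu fv unfolding m_def by simp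
  have dm: "(dist x m)\<^sup>2 \<le> (dist x u)\<^sup>2/2 + (dist x v)\<^sup>2/2 - (dist u v)\<^sup>2/4"
    using geo_comb_ineq[OF cat, of "1/2" x u v] unfolding m_def by simp
  have "ereal \<mu> \<le> f m + ereal ((dist x m)\<^sup>2/(2*\<gamma>))" using mu by simp
  also have "\<dots> \<le> ereal (a/2 + c/2) + ereal (((dist x u)\<^sup>2/2 + (dist x v)\<^sup>2/2 - (dist u v)\<^sup>2/4)/(2*\<gamma>))"
    apply (rule add_mono[OF fm])
    using dm g by (simp add: divide_right_mono)
  finally have "\<mu> \<le> a/2 + c/2 + ((dist x u)\<^sup>2/2 + (dist x v)\<^sup>2/2 - (dist u v)\<^sup>2/4)/(2*\<gamma>)"
    by simp
  moreover have "((dist x u)\<^sup>2/2 + (dist x v)\<^sup>2/2 - (dist u v)\<^sup>2/4)/(2*\<gamma>)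
     = (dist x u)\<^sup>2/(2*\<gamma>)/2 + (dist x v)\<^sup>2/(2*\<gamma>)/2 - (dist u v)\<^sup>2/(8*\<gamma>)"
    by (simp add: diff_divide_distrib add_divide_distrib)
  ultimately show ?thesis by (simp add: add_divide_distrib)
qed

lemma ereal_finite_cases:
  assumes "ereal L \<le> (v::ereal)" "v \<le> ereal U"
  shows "v = ereal (real_of_ereal v)"
  using assms by (cases v) auto

lemma resolvent_min:
  fixes f :: "'a::complete_space \<Rightarrow> ereal"
  assumes cat: "CAT0 TYPE('a)" and conv: "convex_fun f" and lsc: "lsc_fun f" and g: "\<gamma> > 0"
    and lb: "\<forall>z. ereal L \<le> f z" and fp: "f p = ereal P"
  shows "\<forall>z. f (resolvent f \<gamma> x) + ereal ((dist x (resolvent f \<gamma> x))\<^sup>2/(2*\<gamma>))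
            \<le> f z + ereal ((dist x z)\<^sup>2/(2*\<gamma>))"
proof -
  define h where "h y = f y + ereal ((dist x y)\<^sup>2/(2*\<gamma>))" for y
  have hge: "ereal L \<le> h y" for y
  proof -
    have "ereal L + ereal 0 \<le> h y" unfolding h_def
      by (rule add_mono) (use lb g in auto)
    then show ?thesis by simp
  qed
  have hp: "h p = ereal (P + (dist x p)\<^sup>2/(2*\<gamma>))" unfolding h_def fp by simp
  have fin: "f y = ereal (real_of_ereal (f y))" if "h y \<le> ereal U" for y U
  proof -
    have "f y \<noteq> \<infinity>" using that unfolding h_def by auto
    moreover have "f y \<noteq> -\<infinity>" using lb[rule_format, of y] by auto
    ultimately show ?thesis by (cases "f y") auto
  qed
  have hfin: "h y = ereal (real_of_ereal (f y) + (dist x y)\<^sup>2/(2*\<gamma>))" if "h y \<le> ereal U" for y U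
    using fin[OF that] unfolding h_def by (metis plus_ereal.simps(1))
  have ex: "\<exists>y. \<forall>z. h y \<le> h z"
  proof -
    define \<mu> where "\<mu> = Inf (range h)"
    have "ereal L \<le> \<mu>" unfolding \<mu>_def by (rule Inf_greatest) (use hge in auto)
    moreover have "\<mu> \<le> h p" unfolding \<mu>_def by (rule Inf_lower) auto
    ultimately obtain \<mu>r where mur: "\<mu> = ereal \<mu>r" using hp by (cases \<mu>) auto
    have muall: "\<forall>z. ereal \<mu>r \<le> h z" using mur unfolding \<mu>_def by (metis INF_lower UNIV_I)
    have "\<forall>n. \<exists>y. h y < ereal (\<mu>r + 1/Suc n)"
    proof
      fix n
      have "Inf (range h) < ereal (\<mu>r + 1/Suc n)" using mur unfolding \<mu>_def by simp
      then show "\<exists>y. h y < ereal (\<mu>r + 1/Suc n)" by (simp add: Inf_less_iff)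
    qed
    then obtain y where y: "\<And>n. h (y n) < ereal (\<mu>r + 1/Suc n)" by metis
    define a where "a n = real_of_ereal (f (y n))" for n
    define q where "q n = (dist x (y n))\<^sup>2/(2*\<gamma>)" for n
    have hy: "h (y n) = ereal (a n + q n)" for n
      using hfin[of "y n"] y[of n] unfolding a_def q_def by (meson less_imp_le)
    have fy: "f (y n) = ereal (a n)" for n
      using fin[of "y n"] y[of n] unfolding a_def by (meson less_imp_le)
    have b1: "\<mu>r \<le> a n + q n" for n using muall hy by (metis ereal_less_eq(3))
    have b2: "a n + q n < \<mu>r + 1/Suc n" for n using y[of n] hy by simp
    have dd: "(dist (y m) (y n))\<^sup>2/(8*\<gamma>) \<le> (1/Suc m + 1/Suc n)/2" for m n
    proof -
      have "(dist (y m) (y n))\<^sup>2/(8*\<gamma>) \<le> (a m + q m)/2 + (a n + q n)/2 - \<mu>r"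
        using mid_ineq[OF cat conv g _ fy fy, of \<mu>r] muall unfolding h_def q_def by auto
      then show ?thesis using b2[of m] b2[of n] by argo
    qed
    have "Cauchy y"
    proof (rule metric_CauchyI)
      fix e :: real assume e: "0 < e"
      obtain M :: nat where M: "8*\<gamma>/e\<^sup>2 < real M" using reals_Archimedean2 by blast
      show "\<exists>M. \<forall>m\<ge>M. \<forall>n\<ge>M. dist (y m) (y n) < e"
      proof (intro exI allI impI)
        fix m n assume mn: "M \<le> m" "M \<le> n"
        have "(dist (y m) (y n))\<^sup>2 \<le> 8*\<gamma>*((1/Suc m + 1/Suc n)/2)"
          using dd[of m n] g by (simp add: field_simps)
        also have "\<dots> \<le> 8*\<gamma>*(1/Suc M)"
        proof -
          have "1/real (Suc m) \<le> 1/Suc M" "1/real (Suc n) \<le> 1/Suc M"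
            using mn by (simp_all add: frac_le)
          then show ?thesis using g by (intro mult_left_mono) auto
        qed
        also have "\<dots> < e\<^sup>2"
        proof -
          have "8*\<gamma> < e\<^sup>2 * real M" using M e by (simp add: field_simps)
          also have "\<dots> < e\<^sup>2 * real (Suc M)" using e by simp
          finally show ?thesis by (simp add: field_simps)
        qed
        finally show "dist (y m) (y n) < e" using e by (meson power_less_imp_less_base less_imp_le)
      qed
    qed
    then obtain l where l: "y \<longlonglongrightarrow> l" using Cauchy_convergent convergent_def by blast
    have inv: "(\<lambda>n. 1 / real (Suc n)) \<longlonglongrightarrow> 0"
      using LIMSEQ_Suc[OF lim_1_over_n] by simp
    have aq: "(\<lambda>n. a n + q n) \<longlonglongrightarrow> \<mu>r"
    proof (rule tendsto_sandwich[of "\<lambda>n. \<mu>r" _ _ "\<lambda>n. \<mu>r + 1/Suc n"])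
      show "\<forall>\<^sub>F n in sequentially. \<mu>r \<le> a n + q n" using b1 by simp
      show "\<forall>\<^sub>F n in sequentially. a n + q n \<le> \<mu>r + 1/Suc n" by (intro always_eventually allI less_imp_le[OF b2])
      show "(\<lambda>n. \<mu>r + 1/Suc n) \<longlonglongrightarrow> \<mu>r" using tendsto_add[OF tendsto_const inv] by simp
    qed simp
    have qq: "q \<longlonglongrightarrow> (dist x l)\<^sup>2/(2*\<gamma>)" unfolding q_def
      using g by (intro tendsto_intros l) auto
    have alim: "a \<longlonglongrightarrow> \<mu>r - (dist x l)\<^sup>2/(2*\<gamma>)"
      using tendsto_diff[OF aq qq] by simp
    have flb: "f l \<le> ereal (\<mu>r - (dist x l)\<^sup>2/(2*\<gamma>) + \<delta>)" if d: "\<delta> > 0" for \<delta>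
    proof -
      have cl: "closed {z. f z \<le> ereal (\<mu>r - (dist x l)\<^sup>2/(2*\<gamma>) + \<delta>)}"
        using lsc unfolding lsc_fun_def by blast
      have "\<forall>\<^sub>F n in sequentially. a n < \<mu>r - (dist x l)\<^sup>2/(2*\<gamma>) + \<delta>"
        using order_tendstoD(2)[OF alim] d by simp
      then have "\<forall>\<^sub>F n in sequentially. y n \<in> {z. f z \<le> ereal (\<mu>r - (dist x l)\<^sup>2/(2*\<gamma>) + \<delta>)}"
        by eventually_elim (simp add: fy)
      from Lim_in_closed_set[OF cl this _ l] show ?thesis by simp
    qed
    have "f l \<noteq> -\<infinity>" using lb[rule_format, of l] by auto
    moreover have "f l \<noteq> \<infinity>" using flb[of 1] by auto
    ultimately obtain bl where bl: "f l = ereal bl" by (cases "f l") auto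
    have "bl \<le> \<mu>r - (dist x l)\<^sup>2/(2*\<gamma>)"
      by (rule field_le_epsilon) (use flb bl in auto)
    then have "h l \<le> ereal \<mu>r" unfolding h_def bl by simp
    then show ?thesis using muall by (meson order_trans)
  qed
  have uniq: "y1 = y2" if y1: "\<forall>z. h y1 \<le> h z" and y2: "\<forall>z. h y2 \<le> h z" for y1 y2
  proof -
    have h1: "h y1 = ereal (real_of_ereal (f y1) + (dist x y1)\<^sup>2/(2*\<gamma>))"
      using hfin[of y1] y1 hp by metis
    have h2: "h y2 = ereal (real_of_ereal (f y2) + (dist x y2)\<^sup>2/(2*\<gamma>))"
      using hfin[of y2] y2 hp by metis
    have f1: "f y1 = ereal (real_of_ereal (f y1))" using fin[of y1] y1 hp by metis
    have f2: "f y2 = ereal (real_of_ereal (f y2))" using fin[of y2] y2 hp by metis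
    have eq: "h y1 = h y2" using y1 y2 by (meson order_antisym)
    have mu: "\<forall>z. ereal (real_of_ereal (f y1) + (dist x y1)\<^sup>2/(2*\<gamma>)) \<le> f z + ereal ((dist x z)\<^sup>2/(2*\<gamma>))"
      using y1 h1 unfolding h_def by metis
    have "(dist y1 y2)\<^sup>2/(8*\<gamma>) \<le> 0"
      using mid_ineq[OF cat conv g mu f1 f2] eq h1 h2 by simp
    then have "(dist y1 y2)\<^sup>2 \<le> 0" using g by (simp add: divide_le_0_iff)
    then show ?thesis by simp
  qed
  have "\<exists>!y. \<forall>z. h y \<le> h z" using ex uniq by blast
  from theI'[OF this] show ?thesis unfolding resolvent_def h_def by simp
qed

lemma ppa_step:
  fixes f :: "'a::complete_space \<Rightarrow> ereal"
  assumes cat: "CAT0 TYPE('a)" and conv: "convex_fun f" and lsc: "lsc_fun f" and g: "\<gamma> > 0"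
    and fp: "f p = ereal P" and pmin: "\<forall>z. f p \<le> f z"
  shows "\<exists>F. f (resolvent f \<gamma> x) = ereal F \<and> P \<le> F \<and>
            (dist (resolvent f \<gamma> x) p)\<^sup>2 + 2*\<gamma>*(F - P) \<le> (dist x p)\<^sup>2"
proof -
  define z where "z = resolvent f \<gamma> x"
  have lb: "\<forall>z. ereal P \<le> f z" using pmin fp by simp
  have min: "\<forall>w. f z + ereal ((dist x z)\<^sup>2/(2*\<gamma>)) \<le> f w + ereal ((dist x w)\<^sup>2/(2*\<gamma>))"
    unfolding z_def by (rule resolvent_min[OF cat conv lsc g lb fp])
  have "f z \<noteq> \<infinity>" using min[rule_format, of p] fp by auto
  moreover have "f z \<noteq> -\<infinity>" using lb by (metis MInfty_neq_ereal(2) ereal_infty_less_eq(2))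
  ultimately obtain F where F: "f z = ereal F" by (cases "f z") auto
  have PF: "P \<le> F" using lb F by (metis ereal_less_eq(3))
  define A where "A = (dist x z)\<^sup>2"
  define B where "B = (dist x p)\<^sup>2"
  define C where "C = (dist z p)\<^sup>2"
  have key: "2*\<gamma>*(F - P) + C \<le> B + t*C" if t: "0 < t" "t \<le> 1" for t
  proof -
    define m where "m = geo_comb t z p"
    have fm: "f m \<le> ereal ((1-t)*F + t*P)"
      using conv[unfolded convex_fun_def, rule_format, of t z p] F fp t unfolding m_def by simp
    have dm: "(dist x m)\<^sup>2 \<le> (1-t)*A + t*B - t*(1-t)*C"
      using geo_comb_ineq[OF cat, of t x z p] t unfolding m_def A_def B_def C_def by simp
    have "ereal (F + A/(2*\<gamma>)) \<le> f m + ereal ((dist x m)\<^sup>2/(2*\<gamma>))"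
      using min[rule_format, of m] F unfolding A_def by simp
    also have "\<dots> \<le> ereal ((1-t)*F + t*P) + ereal (((1-t)*A + t*B - t*(1-t)*C)/(2*\<gamma>))"
      apply (rule add_mono[OF fm])
      using dm g by (simp add: divide_right_mono)
    finally have E: "F + A/(2*\<gamma>) \<le> (1-t)*F + t*P + ((1-t)*A + t*B - t*(1-t)*C)/(2*\<gamma>)"
      by simp
    have E2: "2*\<gamma>*F + A \<le> 2*\<gamma>*((1-t)*F + t*P) + ((1-t)*A + t*B - t*(1-t)*C)"
    proof -
      have "2*\<gamma>*(F + A/(2*\<gamma>)) \<le> 2*\<gamma>*((1-t)*F + t*P + ((1-t)*A + t*B - t*(1-t)*C)/(2*\<gamma>))"
        using E g by (intro mult_left_mono) auto
      then show ?thesis using g by (simp add: distrib_left)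
    qed
    have "t*(2*\<gamma>*(F - P) + A + C) \<le> t*(B + t*C)"
      using E2 by (simp add: algebra_simps)
    then have "2*\<gamma>*(F - P) + A + C \<le> B + t*C" using t by simp
    moreover have "0 \<le> A" unfolding A_def by simp
    ultimately show ?thesis by linarith
  qed
  have "2*\<gamma>*(F - P) + C \<le> B"
  proof (rule field_le_epsilon)
    fix e :: real assume e: "0 < e"
    define t where "t = min 1 (e/(C+1))"
    have C0: "0 \<le> C" unfolding C_def by simp
    have t: "0 < t" "t \<le> 1" unfolding t_def using e C0 by auto
    have "t*C \<le> e/(C+1)*C" unfolding t_def using C0 by (intro mult_right_mono) auto
    also have "\<dots> \<le> e" using C0 e by (simp add: field_simps)
    finally show "2*\<gamma>*(F - P) + C \<le> B + e" using key[OF t] by linarith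
  qed
  then show ?thesis using F PF unfolding z_def C_def B_def by (intro exI[of _ F]) simp
qed

lemma unif_gap:
  assumes uc: "unif_convex_on f C \<psi>" and yC: "y \<in> C" and pC: "p \<in> C"
    and fy: "f y = ereal Fy" and fp: "f p = ereal P" and pmin: "\<forall>z. f p \<le> f z"
  shows "\<psi> (dist y p) / 2 \<le> Fy - P"
proof -
  have h12: "(1/2::real) \<in> {0..1}" by simp
  have H: "f (geo_comb (1/2) y p) \<le> ereal (1 - 1/2) * f y + ereal (1/2) * f p - ereal (1/2 * (1 - 1/2) * \<psi> (dist y p))"
    using uc[unfolded unif_convex_on_def, rule_format, OF yC pC h12] .
  have "ereal P \<le> f (geo_comb (1/2) y p)" using pmin fp by metis
  also have "\<dots> \<le> ereal (Fy/2 + P/2 - \<psi> (dist y p)/4)" using H fy fp by simp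
  finally have "ereal P \<le> ereal (Fy/2 + P/2 - \<psi> (dist y p)/4)" .
  then show ?thesis by simp
qed

theorem proposition5p4:
  fixes f :: "'a::complete_space \<Rightarrow> ereal"
    and \<psi> :: "real \<Rightarrow> real"
    and \<gamma> :: "nat \<Rightarrow> real"
    and \<theta> :: "nat \<Rightarrow> nat"
    and b :: nat
    and p x :: 'a
    and xs :: "nat \<Rightarrow> 'a"
  assumes "CAT0 TYPE('a)"
    and "convex_fun f" and "proper_fun f" and "lsc_fun f"
    and "Argmin f \<noteq> {}"
    and "\<forall>t\<ge>0. \<psi> t \<ge> 0"
    and "mono_on {0..} \<psi>"
    and "\<forall>t\<ge>0. \<psi> t = 0 \<longleftrightarrow> t = 0"
    and "\<forall>n. \<gamma> n > 0"
    and "\<not> summable (\<lambda>n. (\<gamma> n)\<^sup>2)"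
    and "divergence_rate \<gamma> \<theta>"
    and "p \<in> Argmin f"
    and "unif_convex_on f (cball p (real b)) \<psi>"
    and "x \<in> cball p (real b)"
    and "xs 0 = x"
    and "\<forall>n. xs (Suc n) = resolvent f (\<gamma> n) (xs n)"
  shows "(\<forall>q\<in>cball p (real b). q \<in> Argmin f \<longrightarrow> q = p)
         \<and> xs \<longlonglongrightarrow> p
         \<and> (\<forall>k. \<forall>n\<ge>Omega b \<theta> \<psi> k. dist (xs n) p \<le> 1 / (real k + 1))"
proof -
  note A = assms
  obtain P where fp: "f p = ereal P"
  proof -
    obtain w where "f w \<noteq> \<infinity>" using A(3) unfolding proper_fun_def by blast
    moreover have "f p \<le> f w" using A(12) unfolding Argmin_def by blast
    moreover have "f p \<noteq> -\<infinity>" using A(3) unfolding proper_fun_def by blast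
    ultimately show ?thesis using that by (cases "f p") auto
  qed
  have pmin: "\<forall>z. f p \<le> f z" using A(12) unfolding Argmin_def by blast
  have pC: "p \<in> cball p (real b)" by simp
  have part1: "\<forall>q\<in>cball p (real b). q \<in> Argmin f \<longrightarrow> q = p"
  proof (intro ballI impI)
    fix q assume qC: "q \<in> cball p (real b)" and q: "q \<in> Argmin f"
    have "f q \<le> f p" using q unfolding Argmin_def by blast
    then have fq: "f q = ereal P" using pmin fp by (metis order_antisym)
    have "\<psi> (dist q p) / 2 \<le> P - P" by (rule unif_gap[OF A(13) qC pC fq fp pmin])
    moreover have "\<psi> (dist q p) \<ge> 0" using A(6) by simp
    ultimately have "\<psi> (dist q p) = 0" by simp
    then show "q = p" using A(8) by simp
  qed
  define D where "D n = dist (xs n) p" for n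
  have step: "\<exists>F. f (xs (Suc n)) = ereal F \<and> P \<le> F \<and> (D (Suc n))\<^sup>2 + 2*\<gamma> n*(F - P) \<le> (D n)\<^sup>2" for n
    using ppa_step[OF A(1) A(2) A(4) A(9)[rule_format, of n] fp pmin, of "xs n"] A(16) unfolding D_def by simp
  then obtain Fs where Fs: "\<And>n. f (xs (Suc n)) = ereal (Fs n)" "\<And>n. P \<le> Fs n"
     "\<And>n. (D (Suc n))\<^sup>2 + 2*\<gamma> n*(Fs n - P) \<le> (D n)\<^sup>2" by metis
  have D0: "D n \<ge> 0" for n unfolding D_def by simp
  have Ddec: "D (Suc n) \<le> D n" for n
  proof -
    have "0 \<le> 2*\<gamma> n*(Fs n - P)" using Fs(2)[of n] A(9) by (intro mult_nonneg_nonneg) (auto simp: less_imp_le)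
    then have "(D (Suc n))\<^sup>2 \<le> (D n)\<^sup>2" using Fs(3)[of n] by linarith
    then show ?thesis using D0 by (meson power2_le_imp_le)
  qed
  have decs: "decseq D" by (rule decseq_SucI) (use Ddec in auto)
  have Db: "D n \<le> real b" for n
  proof -
    have "D n \<le> D 0" using decs by (simp add: decseqD)
    also have "D 0 \<le> real b" using A(14) A(15) unfolding D_def by (simp add: dist_commute)
    finally show ?thesis .
  qed
  have rate: "\<forall>k. \<forall>n\<ge>Omega b \<theta> \<psi> k. dist (xs n) p \<le> 1 / (real k + 1)"
  proof (intro allI impI)
    fix k n assume n: "Omega b \<theta> \<psi> k \<le> n"
    define \<epsilon> where "\<epsilon> = 1 / (real k + 1)"
    have eps: "\<epsilon> > 0" unfolding \<epsilon>_def by simp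
    show "dist (xs n) p \<le> 1 / (real k + 1)"
    proof (rule ccontr)
      assume "\<not> ?thesis"
      then have Dn: "\<epsilon> < D n" unfolding D_def \<epsilon>_def by simp
      have bpos: "real b > 0" using Db[of n] Dn eps by linarith
      define ps where "ps = \<psi> \<epsilon>"
      have ps: "ps > 0" using A(6) A(8) eps unfolding ps_def by (metis less_eq_real_def)
      define M where "M = nat \<lceil>(2 * real b) / (2 * ps)\<rceil>"
      define K where "K = b\<^sup>2 * (M + 1)\<^sup>2"
      define T where "T = \<theta> K"
      have OmT: "Omega b \<theta> \<psi> k = T + 1" unfolding Omega_def T_def K_def M_def ps_def \<epsilon>_def by simp
      have big: "\<epsilon> < D (Suc j)" if "j \<le> T" for j
      proof -
        have "D n \<le> D (Suc j)" using decs that n OmT by (simp add: decseqD)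
        then show ?thesis using Dn by simp
      qed
      have gap: "ps / 2 \<le> Fs j - P" if "j \<le> T" for j
      proof -
        have "\<psi> (D (Suc j)) / 2 \<le> Fs j - P"
          using unif_gap[OF A(13) _ pC Fs(1)[of j] fp pmin] Db[of "Suc j"] unfolding D_def
          by (simp add: dist_commute)
        moreover have "\<psi> \<epsilon> \<le> \<psi> (D (Suc j))"
          using mono_onD[OF A(7), of \<epsilon> "D (Suc j)"] big[OF that] eps by simp
        ultimately show ?thesis unfolding ps_def by simp
      qed
      have onestep: "\<gamma> j * ps \<le> (D j)\<^sup>2 - (D (Suc j))\<^sup>2" if "j \<le> T" for j
      proof -
        have "\<gamma> j * ps = 2 * \<gamma> j * (ps/2)" by simp
        also have "\<dots> \<le> 2*\<gamma> j*(Fs j - P)" using gap[OF that] A(9) by (intro mult_left_mono) (auto simp: less_imp_le)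
        finally show ?thesis using Fs(3)[of j] by linarith
      qed
      have tele: "(\<Sum>j=0..N. \<gamma> j) * ps \<le> (D 0)\<^sup>2 - (D (Suc N))\<^sup>2" if "N \<le> T" for N
        using that
      proof (induction N)
        case 0 then show ?case using onestep[of 0] by simp
      next
        case (Suc N)
        then have "(\<Sum>j=0..N. \<gamma> j) * ps \<le> (D 0)\<^sup>2 - (D (Suc N))\<^sup>2" by simp
        moreover have "\<gamma> (Suc N) * ps \<le> (D (Suc N))\<^sup>2 - (D (Suc (Suc N)))\<^sup>2" using onestep Suc.prems by simp
        ultimately show ?case by (simp add: distrib_right)
      qed
      have sumg: "(\<Sum>j=0..T. \<gamma> j) \<le> (real b)\<^sup>2 / ps"
      proof -
        have "(\<Sum>j=0..T. \<gamma> j) * ps \<le> (real b)\<^sup>2"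
        proof -
          have "(D 0)\<^sup>2 \<le> (real b)\<^sup>2" using Db[of 0] D0[of 0] by (simp add: power_mono)
          moreover have "0 \<le> (D (Suc T))\<^sup>2" by simp
          ultimately show ?thesis using tele[of T] by linarith
        qed
        then show ?thesis using ps by (simp add: field_simps)
      qed
      have gb: "\<gamma> j \<le> (real b)\<^sup>2 / ps" if "j \<le> T" for j
      proof -
        have "\<gamma> j * ps \<le> (real b)\<^sup>2"
        proof -
          have "(D j)\<^sup>2 \<le> (real b)\<^sup>2" using Db[of j] D0[of j] by (simp add: power_mono)
          moreover have "0 \<le> (D (Suc j))\<^sup>2" by simp
          ultimately show ?thesis using onestep[OF that] by linarith
        qed
        then show ?thesis using ps by (simp add: field_simps)
      qed
      have "(\<Sum>j=0..T. (\<gamma> j)\<^sup>2) \<le> (\<Sum>j=0..T. \<gamma> j * ((real b)\<^sup>2 / ps))"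
      proof (rule sum_mono)
        fix j assume "j \<in> {0..T}"
        then have "\<gamma> j * \<gamma> j \<le> \<gamma> j * ((real b)\<^sup>2 / ps)"
          using gb[of j] A(9) by (intro mult_left_mono) (auto simp: less_imp_le)
        then show "(\<gamma> j)\<^sup>2 \<le> \<gamma> j * ((real b)\<^sup>2 / ps)" by (simp add: power2_eq_square)
      qed
      also have "\<dots> = (\<Sum>j=0..T. \<gamma> j) * ((real b)\<^sup>2 / ps)" by (rule sum_distrib_right[symmetric])
      also have "\<dots> \<le> ((real b)\<^sup>2 / ps) * ((real b)\<^sup>2 / ps)"
        using sumg ps by (intro mult_right_mono) auto
      also have "\<dots> < real K"
      proof -
        have "real b / ps \<le> real M" unfolding M_def by linarith
        then have "real b * (real b / ps) < real b * (real M + 1)" using bpos by (intro mult_strict_left_mono) auto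
        then have "(real b)\<^sup>2 / ps < real b * (real M + 1)" by (simp add: power2_eq_square)
        moreover have "0 \<le> (real b)\<^sup>2 / ps" using ps by simp
        ultimately have "((real b)\<^sup>2 / ps) * ((real b)\<^sup>2 / ps) < (real b * (real M + 1)) * (real b * (real M + 1))"
          by (intro mult_strict_mono) auto
        then show ?thesis unfolding K_def by (simp add: power2_eq_square algebra_simps)
      qed
      finally have "(\<Sum>j=0..T. (\<gamma> j)\<^sup>2) < real K" .
      moreover have "real K \<le> (\<Sum>j=0..T. (\<gamma> j)\<^sup>2)" using A(11) unfolding divergence_rate_def T_def by blast
      ultimately show False by simp
    qed
  qed
  have conv: "xs \<longlonglongrightarrow> p"
  proof (rule metric_LIMSEQ_I)
    fix r :: real assume r: "0 < r"
    obtain k :: nat where k: "1 / r < real k" using reals_Archimedean2 by blast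
    have "1 / (real k + 1) < r" using k r by (simp add: field_simps)
    then show "\<exists>no. \<forall>n\<ge>no. dist (xs n) p < r"
      using rate[rule_format, of k] by (meson order_le_less_trans)
  qed
  show ?thesis using part1 conv rate by blast
qed

end
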